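(* Let $\bm{L}\in\mathbb{R}^{m\times n}$ have rank $r$ and compact SVD $\bm{L}=\bm{W}_{\bm{L}}\bm{\Sigma}_{\bm{L}}\bm{V}_{\bm{L}}^T$, and suppose $\max_{i}\|\bm{W}_{\bm{L}}^T\bm{e}_i\|_2\leq\sqrt{\mu_1(\bm{L}) r/m}$ and $\max_{i}\|\bm{V}_{\bm{L}}^T\bm{e}_i\|_2\leq\sqrt{\mu_2(\bm{L}) r/n}$. Let $J\subseteq[n]$ and $\bm{C}=\bm{L}(:,J)$. Then \begin{enumerate} \item $\|\bm{C}\|_2\leq\sqrt{\frac{\mu_2(\bm{L})r|J|}{n}}\,\|\bm{L}\|_2$; \item $\kappa(\bm{C})\leq\sqrt{\mu_2(\bm{L}) r}\,\kappa(\bm{L})\sqrt{\frac{|J|}{n}}\,\|\bm{V}_{\bm{L}}(J,:)^\dagger\|_2$. \end{enumerate}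
   Context: $[n]=\{1,\dots,n\}$; $\bm{A}(I,J)$ denotes a submatrix (":" meaning all indices); $\bm{A}^\dagger$ is the Moore–Penrose pseudoinverse; $\kappa(\bm{A})=\|\bm{A}\|_2\|\bm{A}^\dagger\|_2=\sigma_{\max}(\bm{A})/\sigma_{\min}(\bm{A})$ with $\sigma_{\min}$ the smallest nonzero singular value. *)

theory Defs
  imports "Jordan_Normal_Form.Matrix" "Jordan_Normal_Form.DL_Submatrix"
begin

definition vnorm :: "real vec \<Rightarrow> real" where
  "vnorm v = sqrt (\<Sum>i<dim_vec v. (v $ i)^2)"

definition spec_norm :: "real mat \<Rightarrow> real" where
  "spec_norm A = Sup {vnorm (A *\<^sub>v x) | x. x \<in> carrier_vec (dim_col A) \<and> vnorm x \<le> 1}"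

definition is_pinv :: "real mat \<Rightarrow> real mat \<Rightarrow> bool" where
  "is_pinv A X \<longleftrightarrow> X \<in> carrier_mat (dim_col A) (dim_row A) \<and>
     A * X * A = A \<and> X * A * X = X \<and>
     transpose_mat (A * X) = A * X \<and> transpose_mat (X * A) = X * A"

definition pinv :: "real mat \<Rightarrow> real mat" where
  "pinv A = (THE X. is_pinv A X)"

definition cond_num :: "real mat \<Rightarrow> real" where
  "cond_num A = spec_norm A * spec_norm (pinv A)"

definition compact_svd :: "real mat \<Rightarrow> nat \<Rightarrow> real mat \<Rightarrow> real mat \<Rightarrow> real mat \<Rightarrow> bool" where
  "compact_svd L r W S V \<longleftrightarrow>
     W \<in> carrier_mat (dim_row L) r \<and> S \<in> carrier_mat r r \<and> V \<in> carrier_mat (dim_col L) r \<and>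
     transpose_mat W * W = 1\<^sub>m r \<and> transpose_mat V * V = 1\<^sub>m r \<and>
     diagonal_mat S \<and> (\<forall>i<r. S $$ (i,i) > 0) \<and>
     (\<forall>i j. i \<le> j \<and> j < r \<longrightarrow> S $$ (j,j) \<le> S $$ (i,i)) \<and>
     L = W * S * transpose_mat V"

end

theory Submission
  imports Defs "HOL-Analysis.L2_Norm" "Jordan_Normal_Form.Determinant"
begin

lemma vnorm_L2: "vnorm v = L2_set (\<lambda>i. v $ i) {..<dim_vec v}"
  unfolding vnorm_def L2_set_def by simp

lemma vnorm_nonneg: "vnorm v \<ge> 0"
  unfolding vnorm_def by (simp add: sum_nonneg)

lemma vnorm_sq: "vnorm v ^ 2 = v \<bullet> v"
  unfolding vnorm_def scalar_prod_def
  by (simp add: sum_nonneg power2_eq_square atLeast0LessThan)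

lemma vnorm_eq_sqrt: "vnorm v = sqrt (v \<bullet> v)"
  by (metis vnorm_sq vnorm_nonneg real_sqrt_abs abs_of_nonneg)

lemma cauchy_schwarz:
  assumes "dim_vec x = dim_vec y"
  shows "\<bar>x \<bullet> y\<bar> \<le> vnorm x * vnorm y"
proof -
  have "\<bar>x \<bullet> y\<bar> = \<bar>\<Sum>i<dim_vec x. x $ i * y $ i\<bar>"
    unfolding scalar_prod_def using assms by (simp add: atLeast0LessThan)
  also have "\<dots> \<le> (\<Sum>i<dim_vec x. \<bar>x $ i\<bar> * \<bar>y $ i\<bar>)"
    by (metis (no_types, lifting) abs_mult sum.cong sum_abs)
  also have "\<dots> \<le> vnorm x * vnorm y"
    unfolding vnorm_L2 using assms L2_set_mult_ineq by metis
  finally show ?thesis .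
qed

lemma vnorm_smult: "vnorm (a \<cdot>\<^sub>v v) = \<bar>a\<bar> * vnorm v"
proof -
  have "vnorm (a \<cdot>\<^sub>v v) = sqrt (a^2 * (\<Sum>i<dim_vec v. (v $ i)^2))"
    unfolding vnorm_def by (simp add: power_mult_distrib sum_distrib_left)
  then show ?thesis unfolding vnorm_def by (simp add: real_sqrt_mult)
qed

lemma vnorm_zero: "vnorm v = 0 \<Longrightarrow> v = 0\<^sub>v (dim_vec v)"
proof -
  assume "vnorm v = 0"
  hence "(\<Sum>i<dim_vec v. (v $ i)^2) = 0" unfolding vnorm_def by simp
  hence "\<forall>i\<in>{..<dim_vec v}. (v $ i)^2 = 0"
    by (subst (asm) sum_nonneg_eq_0_iff) auto
  thus ?thesis by (intro eq_vecI) auto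
qed

lemma vnorm_zero_vec[simp]: "vnorm (0\<^sub>v n) = 0"
  unfolding vnorm_def by simp

lemma vnorm_mat_vec_frob:
  assumes A: "A \<in> carrier_mat nr nc" and x: "x \<in> carrier_vec nc"
  shows "vnorm (A *\<^sub>v x) ^ 2 \<le> (\<Sum>i<nr. vnorm (row A i) ^ 2) * vnorm x ^ 2"
proof -
  have "vnorm (A *\<^sub>v x) ^ 2 = (\<Sum>i<nr. (row A i \<bullet> x)^2)"
    unfolding vnorm_def using A by (simp add: sum_nonneg)
  also have "\<dots> \<le> (\<Sum>i<nr. vnorm (row A i) ^ 2 * vnorm x ^ 2)"
  proof (rule sum_mono)
    fix i assume "i \<in> {..<nr}"
    have "\<bar>row A i \<bullet> x\<bar> \<le> vnorm (row A i) * vnorm x"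
      using A x by (intro cauchy_schwarz) auto
    hence "\<bar>row A i \<bullet> x\<bar>^2 \<le> (vnorm (row A i) * vnorm x)^2"
      by (intro power_mono) auto
    thus "(row A i \<bullet> x)^2 \<le> vnorm (row A i) ^ 2 * vnorm x ^ 2"
      by (simp add: power_mult_distrib)
  qed
  also have "\<dots> = (\<Sum>i<nr. vnorm (row A i) ^ 2) * vnorm x ^ 2"
    by (simp add: sum_distrib_right)
  finally show ?thesis .
qed

lemma vnorm_mat_vec_bound:
  assumes A: "A \<in> carrier_mat nr nc" and x: "x \<in> carrier_vec nc"
  shows "vnorm (A *\<^sub>v x) \<le> sqrt (\<Sum>i<nr. vnorm (row A i) ^ 2) * vnorm x"
proof -
  have "vnorm (A *\<^sub>v x) ^ 2 \<le> (sqrt (\<Sum>i<nr. vnorm (row A i) ^ 2) * vnorm x) ^ 2"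
    using vnorm_mat_vec_frob[OF A x]
    by (simp add: power_mult_distrib sum_nonneg)
  thus ?thesis
    by (meson power2_le_imp_le mult_nonneg_nonneg real_sqrt_ge_zero sum_nonneg
        vnorm_nonneg zero_le_power2)
qed

definition nset :: "real mat \<Rightarrow> real set" where
  "nset A = {vnorm (A *\<^sub>v x) | x. x \<in> carrier_vec (dim_col A) \<and> vnorm x \<le> 1}"

lemma spec_norm_nset: "spec_norm A = Sup (nset A)"
  unfolding spec_norm_def nset_def by simp

lemma nset_bdd: "bdd_above (nset A)"
proof -
  let ?c = "sqrt (\<Sum>i<dim_row A. vnorm (row A i) ^ 2)"
  have "\<forall>y\<in>nset A. y \<le> ?c"
  proof
    fix y assume "y \<in> nset A"
    then obtain x where x: "x \<in> carrier_vec (dim_col A)" "vnorm x \<le> 1" and y: "y = vnorm (A *\<^sub>v x)"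
      unfolding nset_def by auto
    have "y \<le> ?c * vnorm x" unfolding y by (rule vnorm_mat_vec_bound[OF _ x(1)]) auto
    also have "\<dots> \<le> ?c" using x(2) by (simp add: mult_left_le sum_nonneg)
    finally show "y \<le> ?c" .
  qed
  thus ?thesis by (auto simp: bdd_above_def)
qed

lemma mult_zero_vec_r[simp]: "A *\<^sub>v 0\<^sub>v (dim_col A) = (0\<^sub>v (dim_row A) :: real vec)"
  by (intro eq_vecI) (auto simp: scalar_prod_def)

lemma zero_in_nset: "0 \<in> nset A"
  unfolding nset_def
  by (rule CollectI, rule exI[of _ "0\<^sub>v (dim_col A)"]) auto

lemma spec_norm_nonneg: "spec_norm A \<ge> 0"
  unfolding spec_norm_nset using zero_in_nset nset_bdd by (rule cSup_upper)

lemma spec_norm_bound: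
  assumes x: "x \<in> carrier_vec (dim_col A)"
  shows "vnorm (A *\<^sub>v x) \<le> spec_norm A * vnorm x"
proof (cases "vnorm x = 0")
  case True
  hence "x = 0\<^sub>v (dim_col A)" using vnorm_zero x by fastforce
  hence "A *\<^sub>v x = 0\<^sub>v (dim_row A)" by auto
  then show ?thesis using True by simp
next
  case False
  hence pos: "vnorm x > 0" using vnorm_nonneg[of x] by linarith
  let ?x = "(1 / vnorm x) \<cdot>\<^sub>v x"
  have "vnorm ?x = 1" using pos by (simp add: vnorm_smult)
  hence "vnorm (A *\<^sub>v ?x) \<in> nset A" unfolding nset_def using x by auto
  hence "vnorm (A *\<^sub>v ?x) \<le> spec_norm A" unfolding spec_norm_nset using nset_bdd by (rule cSup_upper)
  moreover have "A *\<^sub>v ?x = (1 / vnorm x) \<cdot>\<^sub>v (A *\<^sub>v x)"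
    using x by (intro mult_mat_vec) auto
  ultimately have "vnorm (A *\<^sub>v x) / vnorm x \<le> spec_norm A"
    using pos by (simp add: vnorm_smult)
  thus ?thesis using pos by (simp add: divide_le_eq mult.commute)
qed

lemma spec_norm_le:
  assumes c: "c \<ge> 0" and h: "\<And>x. x \<in> carrier_vec (dim_col A) \<Longrightarrow> vnorm (A *\<^sub>v x) \<le> c * vnorm x"
  shows "spec_norm A \<le> c"
  unfolding spec_norm_nset
proof (rule cSup_least)
  show "nset A \<noteq> {}" using zero_in_nset by auto
  fix y assume "y \<in> nset A"
  then obtain x where x: "x \<in> carrier_vec (dim_col A)" "vnorm x \<le> 1" and y: "y = vnorm (A *\<^sub>v x)"
    unfolding nset_def by auto
  have "y \<le> c * vnorm x" using h[OF x(1)] y by simp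
  also have "\<dots> \<le> c" using x(2) c by (simp add: mult_left_le)
  finally show "y \<le> c" .
qed

lemma assoc_dim:
  fixes A B C :: "'a::comm_semiring_0 mat"
  assumes "dim_col A = dim_row B" "dim_col B = dim_row C"
  shows "A * B * C = A * (B * C)"
proof -
  have 1: "A \<in> carrier_mat (dim_row A) (dim_col A)" by (auto intro!: carrier_matI)
  have 2: "B \<in> carrier_mat (dim_col A) (dim_col B)" using assms by (auto intro!: carrier_matI)
  have 3: "C \<in> carrier_mat (dim_col B) (dim_col C)" using assms by (auto intro!: carrier_matI)
  from 1 2 3 show ?thesis by (rule assoc_mult_mat)
qed

lemma transpose_mult_dim:
  fixes A B :: "'a::comm_semiring_0 mat"
  assumes "dim_col A = dim_row B"
  shows "transpose_mat (A * B) = transpose_mat B * transpose_mat A"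
proof -
  have 1: "A \<in> carrier_mat (dim_row A) (dim_col A)" by (auto intro!: carrier_matI)
  have 2: "B \<in> carrier_mat (dim_col A) (dim_col B)" using assms by (auto intro!: carrier_matI)
  from 1 2 show ?thesis by (rule transpose_mult)
qed

lemma assoc_dim_vec:
  fixes A B :: "'a::comm_semiring_0 mat"
  assumes "dim_col A = dim_row B" "dim_col B = dim_vec v"
  shows "(A * B) *\<^sub>v v = A *\<^sub>v (B *\<^sub>v v)"
proof -
  have 1: "A \<in> carrier_mat (dim_row A) (dim_col A)" by (auto intro!: carrier_matI)
  have 2: "B \<in> carrier_mat (dim_col A) (dim_col B)" using assms by (auto intro!: carrier_matI)
  have 3: "v \<in> carrier_vec (dim_col B)" using assms by (auto intro!: carrier_vecI)
  from 1 2 3 show ?thesis by (rule assoc_mult_mat_vec)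
qed

lemma inj_inverse:
  fixes Q :: "real mat"
  assumes Q: "Q \<in> carrier_mat k k" and inj: "\<And>x. x \<in> carrier_vec k \<Longrightarrow> Q *\<^sub>v x = 0\<^sub>v k \<Longrightarrow> x = 0\<^sub>v k"
  shows "\<exists>Qi \<in> carrier_mat k k. Q * Qi = 1\<^sub>m k \<and> Qi * Q = 1\<^sub>m k"
proof -
  have "det Q \<noteq> 0" using det_0_iff_vec_prod_zero_field[OF Q] inj by auto
  hence "Q \<in> Units (ring_mat TYPE(real) k ())" by (rule det_non_zero_imp_unit[OF Q])
  thus ?thesis unfolding Units_def ring_mat_def by auto
qed

lemma gram_inj:
  fixes F :: "real mat"
  assumes F: "F \<in> carrier_mat m k" and inj: "\<And>x. x \<in> carrier_vec k \<Longrightarrow> F *\<^sub>v x = 0\<^sub>v m \<Longrightarrow> x = 0\<^sub>v k"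
    and x: "x \<in> carrier_vec k" and z: "(transpose_mat F * F) *\<^sub>v x = 0\<^sub>v k"
  shows "x = 0\<^sub>v k"
proof -
  have "(transpose_mat F *\<^sub>v (F *\<^sub>v x)) \<bullet> x = (F *\<^sub>v x) \<bullet> (F *\<^sub>v x)"
    using F x by (intro transpose_vec_mult_scalar) auto
  moreover have "transpose_mat F *\<^sub>v (F *\<^sub>v x) = 0\<^sub>v k"
    using z F x by (subst assoc_dim_vec[symmetric]) auto
  ultimately have "(F *\<^sub>v x) \<bullet> (F *\<^sub>v x) = 0" using x by simp
  hence "F *\<^sub>v x = 0\<^sub>v m" using F
    by (metis (no_types, lifting) carrier_matD(1) dim_mult_mat_vec power_eq_0_iff vnorm_sq vnorm_zero)
  thus ?thesis using inj x by blast
qed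

lemma inv_sym:
  fixes Q Qi :: "real mat"
  assumes Q: "Q \<in> carrier_mat k k" and Qi: "Qi \<in> carrier_mat k k"
    and s: "transpose_mat Q = Q" and i1: "Q * Qi = 1\<^sub>m k" and i2: "Qi * Q = 1\<^sub>m k"
  shows "transpose_mat Qi = Qi"
proof -
  have "transpose_mat (Q * Qi) = transpose_mat Qi * transpose_mat Q"
    by (rule transpose_mult_dim) (use Q Qi in auto)
  hence e: "transpose_mat Qi * Q = 1\<^sub>m k" using i1 s by simp
  have "transpose_mat Qi * Q * Qi = transpose_mat Qi * (Q * Qi)"
    by (rule assoc_dim) (use Q Qi in auto)
  also have "\<dots> = transpose_mat Qi" using i1 Qi by simp
  finally show ?thesis using e Qi by simp
qed

lemma pinv_from_fact:
  fixes A F G :: "real mat"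
  assumes F: "F \<in> carrier_mat m k" and G: "G \<in> carrier_mat k n" and A: "A = F * G"
    and injF: "\<And>x. x \<in> carrier_vec k \<Longrightarrow> F *\<^sub>v x = 0\<^sub>v m \<Longrightarrow> x = 0\<^sub>v k"
    and injG: "\<And>x. x \<in> carrier_vec k \<Longrightarrow> transpose_mat G *\<^sub>v x = 0\<^sub>v n \<Longrightarrow> x = 0\<^sub>v k"
  shows "\<exists>X. is_pinv A X"
proof -
  let ?Q = "transpose_mat F * F"
  let ?P = "G * transpose_mat G"
  have Qc: "?Q \<in> carrier_mat k k" using F by auto
  have Pc: "?P \<in> carrier_mat k k" using G by auto
  obtain Qi where Qi: "Qi \<in> carrier_mat k k" "?Q * Qi = 1\<^sub>m k" "Qi * ?Q = 1\<^sub>m k"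
    using inj_inverse[OF Qc] gram_inj[OF F injF] by blast
  have GT: "transpose_mat G \<in> carrier_mat n k" using G by auto
  obtain Pi where Pi: "Pi \<in> carrier_mat k k" "?P * Pi = 1\<^sub>m k" "Pi * ?P = 1\<^sub>m k"
    using inj_inverse[OF Pc] gram_inj[OF GT injG] by fastforce
  have Qs: "transpose_mat ?Q = ?Q" using F by (simp add: transpose_mult_dim)
  have Ps: "transpose_mat ?P = ?P" using G by (simp add: transpose_mult_dim)
  have Qis: "transpose_mat Qi = Qi" by (rule inv_sym[OF Qc Qi(1) Qs Qi(2,3)])
  have Pis: "transpose_mat Pi = Pi" by (rule inv_sym[OF Pc Pi(1) Ps Pi(2,3)])
  define X where "X = transpose_mat G * (Pi * (Qi * transpose_mat F))"
  have Xc: "X \<in> carrier_mat n m" unfolding X_def using F G Pi Qi by auto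
  have AX: "A * X = F * (Qi * transpose_mat F)"
  proof -
    have "A * X = F * ((?P * Pi) * (Qi * transpose_mat F))"
      unfolding A X_def using F G Pi(1) Qi(1) by (simp add: assoc_dim)
    thus ?thesis using Pi Qi F by simp
  qed
  have XA: "X * A = transpose_mat G * (Pi * G)"
  proof -
    have "X * A = transpose_mat G * (Pi * ((Qi * ?Q) * G))"
      unfolding A X_def using F G Pi(1) Qi(1) by (simp add: assoc_dim)
    thus ?thesis using Pi Qi G by simp
  qed
  have "A * X * A = A"
  proof -
    have "A * X * A = F * ((Qi * ?Q) * G)"
      unfolding AX unfolding A using F G Pi(1) Qi(1) by (simp add: assoc_dim)
    thus ?thesis using Qi G A by simp
  qed
  moreover have "X * A * X = X"
  proof -
    have "X * A * X = transpose_mat G * ((Pi * ?P) * (Pi * (Qi * transpose_mat F)))"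
      unfolding XA unfolding X_def using F G Pi(1) Qi(1) by (simp add: assoc_dim)
    thus ?thesis using Pi Qi F unfolding X_def by simp
  qed
  moreover have "transpose_mat (A * X) = A * X"
    unfolding AX using F Qi Qis by (simp add: transpose_mult_dim assoc_dim)
  moreover have "transpose_mat (X * A) = X * A"
    unfolding XA using G Pi Pis by (simp add: transpose_mult_dim assoc_dim)
  ultimately have "is_pinv A X" unfolding is_pinv_def using Xc A F G by auto
  thus ?thesis by blast
qed

lemma pinv_unique:
  fixes A X Y :: "real mat"
  assumes A: "A \<in> carrier_mat m n" and X: "is_pinv A X" and Y: "is_pinv A Y"
  shows "X = Y"
proof -
  have Xc: "X \<in> carrier_mat n m" and Yc: "Y \<in> carrier_mat n m"
    using A X Y unfolding is_pinv_def by auto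
  have cT: "transpose_mat A \<in> carrier_mat n m" "transpose_mat X \<in> carrier_mat m n"
    "transpose_mat Y \<in> carrier_mat m n" using A Xc Yc by auto
  note c = A Xc Yc cT
  have X1: "A * X * A = A" "X * A * X = X" "transpose_mat (A * X) = A * X" "transpose_mat (X * A) = X * A"
    using X unfolding is_pinv_def by auto
  have Y1: "A * Y * A = A" "Y * A * Y = Y" "transpose_mat (A * Y) = A * Y" "transpose_mat (Y * A) = Y * A"
    using Y unfolding is_pinv_def by auto
  have AT: "transpose_mat A = transpose_mat A * (A * Y)"
  proof -
    have "transpose_mat A = transpose_mat (A * Y * A)" using Y1 by simp
    also have "\<dots> = transpose_mat A * transpose_mat (A * Y)"
      using c by (intro transpose_mult[of _ m m]) auto
    finally show ?thesis using Y1 by simp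
  qed
  have AT2: "transpose_mat A = (X * A) * transpose_mat A"
  proof -
    have "transpose_mat A = transpose_mat (A * X * A)" using X1 by simp
    also have "\<dots> = transpose_mat (A * (X * A))" using c by simp
    also have "\<dots> = transpose_mat (X * A) * transpose_mat A"
      using c by (intro transpose_mult[of _ m n]) auto
    finally show ?thesis using X1 by simp
  qed
  have "X = X * (A * X)" using X1 c by simp
  also have "\<dots> = X * (transpose_mat X * transpose_mat A)"
    using X1 c by (metis transpose_mult)
  also have "\<dots> = X * (transpose_mat X * (transpose_mat A * (A * Y)))"
    using AT by simp
  also have "\<dots> = X * (transpose_mat (A * X) * (A * Y))"
  proof -
    have "A * Y \<in> carrier_mat m m" using c by auto
    then show ?thesis using transpose_mult[OF A Xc] assoc_mult_mat[OF cT(2) cT(1), of "A*Y" m] by simp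
  qed
  also have "\<dots> = X * A * Y"
  proof -
    have AX: "A * X \<in> carrier_mat m m" using c by auto
    have "A * X * (A * Y) = A * X * A * Y"
      using assoc_mult_mat[OF AX A Yc] by simp
    also have "\<dots> = A * Y" using X1 by simp
    finally show ?thesis using X1(3) c by simp
  qed
  finally have e1: "X = X * A * Y" .
  have "Y = (Y * A) * Y" using Y1 c by simp
  also have "\<dots> = (transpose_mat A * transpose_mat Y) * Y"
    using Y1 c by (metis transpose_mult)
  also have "\<dots> = (((X * A) * transpose_mat A) * transpose_mat Y) * Y"
    using AT2 by simp
  also have "\<dots> = ((X * A) * transpose_mat (Y * A)) * Y"
  proof -
    have "X * A \<in> carrier_mat n n" using c by auto
    then show ?thesis using transpose_mult[OF Yc A] assoc_mult_mat[OF _ cT(1) cT(3), of "X*A" n] by simp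
  qed
  also have "\<dots> = X * A * Y"
  proof -
    have XA: "X * A \<in> carrier_mat n n" using c by auto
    have YA: "Y * A \<in> carrier_mat n n" using c by auto
    have "X * A * (Y * A) * Y = X * A * (Y * A * Y)"
      using assoc_mult_mat[OF XA YA Yc] by simp
    also have "\<dots> = X * A * Y" using Y1 by simp
    finally show ?thesis using Y1(4) by simp
  qed
  finally show ?thesis using e1 by simp
qed

definition rfact :: "real mat \<Rightarrow> nat \<Rightarrow> nat \<Rightarrow> nat \<Rightarrow> real mat \<Rightarrow> real mat \<Rightarrow> bool" where
  "rfact A m n k F G \<longleftrightarrow> F \<in> carrier_mat m k \<and> G \<in> carrier_mat k n \<and> A = F * G \<and>
     (\<forall>x \<in> carrier_vec k. F *\<^sub>v x = 0\<^sub>v m \<longrightarrow> x = 0\<^sub>v k) \<and>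
     (\<forall>x \<in> carrier_vec k. transpose_mat G *\<^sub>v x = 0\<^sub>v n \<longrightarrow> x = 0\<^sub>v k)"

lemma rank_fact_exists:
  fixes A :: "real mat"
  shows "A \<in> carrier_mat m n \<Longrightarrow> \<exists>k F G. rfact A m n k F G"
proof (induction n arbitrary: A)
  case 0
  have "rfact A m 0 0 (0\<^sub>m m 0) (0\<^sub>m 0 0)"
    unfolding rfact_def using 0 by (auto intro!: eq_matI eq_vecI)
  then show ?case by blast
next
  case (Suc n)
  note Ac = Suc.prems
  define A' where "A' = mat m n (\<lambda>(i,j). A $$ (i,j))"
  define a where "a = col A n"
  have A'c: "A' \<in> carrier_mat m n" unfolding A'_def by auto
  have ac: "a \<in> carrier_vec m" unfolding a_def using Ac by auto
  obtain k F' G' where fact: "rfact A' m n k F' G'" using Suc.IH[OF A'c] by blast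
  have F'c: "F' \<in> carrier_mat m k" and G'c: "G' \<in> carrier_mat k n" and A'eq: "A' = F' * G'"
    and injF': "\<And>x. x \<in> carrier_vec k \<Longrightarrow> F' *\<^sub>v x = 0\<^sub>v m \<Longrightarrow> x = 0\<^sub>v k"
    and injG': "\<And>x. x \<in> carrier_vec k \<Longrightarrow> transpose_mat G' *\<^sub>v x = 0\<^sub>v n \<Longrightarrow> x = 0\<^sub>v k"
    using fact unfolding rfact_def by auto
  have A'ent: "\<And>i j. i < m \<Longrightarrow> j < n \<Longrightarrow> A $$ (i,j) = row F' i \<bullet> col G' j"
  proof -
    fix i j assume ij: "i < m" "j < n"
    have "A $$ (i,j) = A' $$ (i,j)" unfolding A'_def using ij by simp
    also have "\<dots> = row F' i \<bullet> col G' j" unfolding A'eq using ij F'c G'c by simp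
    finally show "A $$ (i,j) = row F' i \<bullet> col G' j" .
  qed
  show ?case
  proof (cases "\<exists>c \<in> carrier_vec k. F' *\<^sub>v c = a")
    case True
    then obtain c where cc: "c \<in> carrier_vec k" and ceq: "F' *\<^sub>v c = a" by blast
    define G where "G = mat k (Suc n) (\<lambda>(i,j). if j < n then G' $$ (i,j) else c $ i)"
    have Gc: "G \<in> carrier_mat k (Suc n)" unfolding G_def by auto
    have colG: "\<And>j. j < n \<Longrightarrow> col G j = col G' j"
      unfolding G_def using G'c by (auto intro!: eq_vecI)
    have colGn: "col G n = c" unfolding G_def using cc by (auto intro!: eq_vecI)
    have "A = F' * G"
    proof (rule eq_matI)
      fix i j assume ij: "i < dim_row (F' * G)" "j < dim_col (F' * G)"
      hence i: "i < m" and j: "j < Suc n" using F'c Gc by auto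
      show "A $$ (i,j) = (F' * G) $$ (i,j)"
      proof (cases "j < n")
        case True
        then show ?thesis using A'ent[OF i True] colG[OF True] i j F'c Gc by simp
      next
        case False
        hence jn: "j = n" using j by simp
        have "(F' * G) $$ (i,j) = row F' i \<bullet> c" using i j F'c Gc colGn jn by simp
        also have "\<dots> = a $ i" using ceq[symmetric] i F'c by simp
        also have "\<dots> = A $$ (i,j)" unfolding a_def using i jn Ac by simp
        finally show ?thesis by simp
      qed
    qed (use Ac F'c Gc in auto)
    moreover have "\<forall>x \<in> carrier_vec k. transpose_mat G *\<^sub>v x = 0\<^sub>v (Suc n) \<longrightarrow> x = 0\<^sub>v k"
    proof (intro ballI impI)
      fix x assume x: "x \<in> carrier_vec k" and z: "transpose_mat G *\<^sub>v x = 0\<^sub>v (Suc n)"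
      have "transpose_mat G' *\<^sub>v x = 0\<^sub>v n"
      proof (rule eq_vecI)
        fix j assume "j < dim_vec (0\<^sub>v n :: real vec)"
        hence j: "j < n" by simp
        have "(transpose_mat G *\<^sub>v x) $ j = 0" using z j by simp
        thus "(transpose_mat G' *\<^sub>v x) $ j = 0\<^sub>v n $ j"
          using j colG[OF j] Gc G'c by simp
      qed (use G'c in simp)
      thus "x = 0\<^sub>v k" using injG' x by blast
    qed
    ultimately have "rfact A m (Suc n) k F' G"
      unfolding rfact_def using F'c Gc injF' by blast
    then show ?thesis by blast
  next
    case False
    define F where "F = mat m (Suc k) (\<lambda>(i,j). if j < k then F' $$ (i,j) else a $ i)"
    define G where "G = mat (Suc k) (Suc n) (\<lambda>(i,j). if i < k then (if j < n then G' $$ (i,j) else 0)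
        else (if j < n then 0 else 1))"
    have Fc: "F \<in> carrier_mat m (Suc k)" unfolding F_def by auto
    have Gc: "G \<in> carrier_mat (Suc k) (Suc n)" unfolding G_def by auto
    have Fx: "\<And>x i. x \<in> carrier_vec (Suc k) \<Longrightarrow> i < m \<Longrightarrow>
       (F *\<^sub>v x) $ i = (F' *\<^sub>v vec k (\<lambda>l. x $ l)) $ i + a $ i * x $ k"
    proof -
      fix x :: "real vec" and i assume x: "x \<in> carrier_vec (Suc k)" and i: "i < m"
      have "(F *\<^sub>v x) $ i = (\<Sum>l<Suc k. F $$ (i,l) * x $ l)"
        using Fc x i by (simp add: scalar_prod_def atLeast0LessThan)
      also have "\<dots> = (\<Sum>l<k. F' $$ (i,l) * x $ l) + a $ i * x $ k"
        unfolding F_def using i by simp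
      also have "(\<Sum>l<k. F' $$ (i,l) * x $ l) = (F' *\<^sub>v vec k (\<lambda>l. x $ l)) $ i"
        using F'c i by (simp add: scalar_prod_def atLeast0LessThan)
      finally show "(F *\<^sub>v x) $ i = (F' *\<^sub>v vec k (\<lambda>l. x $ l)) $ i + a $ i * x $ k" .
    qed
    have GTx: "\<And>x j. x \<in> carrier_vec (Suc k) \<Longrightarrow> j < Suc n \<Longrightarrow>
       (transpose_mat G *\<^sub>v x) $ j = (if j < n then (transpose_mat G' *\<^sub>v vec k (\<lambda>l. x $ l)) $ j else x $ k)"
    proof -
      fix x :: "real vec" and j assume x: "x \<in> carrier_vec (Suc k)" and j: "j < Suc n"
      have "(transpose_mat G *\<^sub>v x) $ j = (\<Sum>l<Suc k. G $$ (l,j) * x $ l)"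
        using Gc x j by (simp add: scalar_prod_def atLeast0LessThan)
      also have "\<dots> = (\<Sum>l<k. G $$ (l,j) * x $ l) + G $$ (k,j) * x $ k" by simp
      also have "\<dots> = (if j < n then (transpose_mat G' *\<^sub>v vec k (\<lambda>l. x $ l)) $ j else x $ k)"
        unfolding G_def using j G'c by (simp add: scalar_prod_def atLeast0LessThan)
      finally show "(transpose_mat G *\<^sub>v x) $ j = (if j < n then (transpose_mat G' *\<^sub>v vec k (\<lambda>l. x $ l)) $ j else x $ k)" .
    qed
    have "A = F * G"
    proof (rule eq_matI)
      fix i j assume ij: "i < dim_row (F * G)" "j < dim_col (F * G)"
      hence i: "i < m" and j: "j < Suc n" using Fc Gc by auto
      have "(F * G) $$ (i,j) = (\<Sum>l<Suc k. F $$ (i,l) * G $$ (l,j))"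
        using Fc Gc i j by (simp add: scalar_prod_def atLeast0LessThan)
      also have "\<dots> = (\<Sum>l<k. F $$ (i,l) * G $$ (l,j)) + F $$ (i,k) * G $$ (k,j)" by simp
      also have "\<dots> = A $$ (i,j)"
      proof (cases "j < n")
        case True
        then show ?thesis unfolding F_def G_def using A'ent[OF i True] i F'c G'c
          by (simp add: scalar_prod_def atLeast0LessThan)
      next
        case False
        hence jn: "j = n" using j by simp
        then show ?thesis unfolding F_def G_def a_def using i Ac by simp
      qed
      finally show "A $$ (i,j) = (F * G) $$ (i,j)" by simp
    qed (use Ac Fc Gc in auto)
    moreover have "\<forall>x \<in> carrier_vec (Suc k). F *\<^sub>v x = 0\<^sub>v m \<longrightarrow> x = 0\<^sub>v (Suc k)"
    proof (intro ballI impI)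
      fix x :: "real vec" assume x: "x \<in> carrier_vec (Suc k)" and z: "F *\<^sub>v x = 0\<^sub>v m"
      let ?x = "vec k (\<lambda>l. x $ l)"
      have e: "\<And>i. i < m \<Longrightarrow> (F' *\<^sub>v ?x) $ i + a $ i * x $ k = 0"
        using Fx[OF x] z by (metis index_zero_vec(1))
      have xk: "x $ k = 0"
      proof (rule ccontr)
        assume nz: "x $ k \<noteq> 0"
        let ?c = "(- 1 / x $ k) \<cdot>\<^sub>v ?x"
        have "F' *\<^sub>v ?c = a"
        proof (rule eq_vecI)
          fix i assume "i < dim_vec a" hence i: "i < m" using ac by simp
          have "(F' *\<^sub>v ?c) $ i = (- 1 / x $ k) * (F' *\<^sub>v ?x) $ i"
            using mult_mat_vec[OF F'c, of ?x "- 1 / x $ k"] i F'c by simp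
          also have "\<dots> = a $ i" using e[OF i] nz by (simp add: field_simps)
          finally show "(F' *\<^sub>v ?c) $ i = a $ i" .
        qed (use F'c ac in simp)
        moreover have "?c \<in> carrier_vec k" by simp
        ultimately show False using False by blast
      qed
      have "F' *\<^sub>v ?x = 0\<^sub>v m"
        by (rule eq_vecI) (use e xk F'c in auto)
      hence "?x = 0\<^sub>v k" using injF' by simp
      show "x = 0\<^sub>v (Suc k)"
      proof (rule eq_vecI)
        fix l assume "l < dim_vec (0\<^sub>v (Suc k) :: real vec)"
        hence l: "l < Suc k" by simp
        show "x $ l = 0\<^sub>v (Suc k) $ l"
        proof (cases "l < k")
          case True
          then show ?thesis using \<open>?x = 0\<^sub>v k\<close> l
            by (metis index_vec index_zero_vec(1))
        next
          case False
          hence "l = k" using l by simp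
          then show ?thesis using xk by simp
        qed
      qed (use x in simp)
    qed
    moreover have "\<forall>x \<in> carrier_vec (Suc k). transpose_mat G *\<^sub>v x = 0\<^sub>v (Suc n) \<longrightarrow> x = 0\<^sub>v (Suc k)"
    proof (intro ballI impI)
      fix x :: "real vec" assume x: "x \<in> carrier_vec (Suc k)" and z: "transpose_mat G *\<^sub>v x = 0\<^sub>v (Suc n)"
      let ?x = "vec k (\<lambda>l. x $ l)"
      have xk: "x $ k = 0" using GTx[OF x, of n] z by (metis index_zero_vec(1) lessI less_irrefl)
      have "transpose_mat G' *\<^sub>v ?x = 0\<^sub>v n"
      proof (rule eq_vecI)
        fix j assume "j < dim_vec (0\<^sub>v n :: real vec)"
        hence j: "j < n" by simp
        have "(transpose_mat G *\<^sub>v x) $ j = 0" using z j by simp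
        thus "(transpose_mat G' *\<^sub>v ?x) $ j = 0\<^sub>v n $ j" using GTx[OF x, of j] j by simp
      qed (use G'c in simp)
      hence "?x = 0\<^sub>v k" using injG' by simp
      show "x = 0\<^sub>v (Suc k)"
      proof (rule eq_vecI)
        fix l assume "l < dim_vec (0\<^sub>v (Suc k) :: real vec)"
        hence l: "l < Suc k" by simp
        show "x $ l = 0\<^sub>v (Suc k) $ l"
        proof (cases "l < k")
          case True
          then show ?thesis using \<open>?x = 0\<^sub>v k\<close> l
            by (metis index_vec index_zero_vec(1))
        next
          case False
          hence "l = k" using l by simp
          then show ?thesis using xk by simp
        qed
      qed (use x in simp)
    qed
    ultimately have "rfact A m (Suc n) (Suc k) F G"
      unfolding rfact_def using Fc Gc by blast
    then show ?thesis by blast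
  qed
qed

lemma pinv_is_pinv:
  fixes A :: "real mat"
  assumes A: "A \<in> carrier_mat m n"
  shows "is_pinv A (pinv A)"
proof -
  obtain k F G where "rfact A m n k F G" using rank_fact_exists[OF A] by blast
  hence "\<exists>X. is_pinv A X" unfolding rfact_def using pinv_from_fact by blast
  then obtain X where X: "is_pinv A X" by blast
  have "(THE X. is_pinv A X) = X"
    by (rule the_equality[of "is_pinv A" X, OF X]) (use pinv_unique[OF A] X in blast)
  thus ?thesis unfolding pinv_def using X by simp
qed

lemma isometry:
  fixes W :: "real mat"
  assumes W: "W \<in> carrier_mat m r" and WW: "transpose_mat W * W = 1\<^sub>m r" and u: "u \<in> carrier_vec r"
  shows "vnorm (W *\<^sub>v u) = vnorm u"
proof -
  have "(transpose_mat W *\<^sub>v (W *\<^sub>v u)) \<bullet> u = (W *\<^sub>v u) \<bullet> (W *\<^sub>v u)"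
    using W u by (intro transpose_vec_mult_scalar) auto
  moreover have "transpose_mat W *\<^sub>v (W *\<^sub>v u) = u"
    using W u WW by (subst assoc_dim_vec[symmetric]) auto
  ultimately have "(W *\<^sub>v u) \<bullet> (W *\<^sub>v u) = u \<bullet> u" by simp
  thus ?thesis by (simp add: vnorm_eq_sqrt)
qed

lemma transpose_bound:
  fixes A :: "real mat"
  assumes w: "w \<in> carrier_vec (dim_row A)"
  shows "vnorm (transpose_mat A *\<^sub>v w) \<le> spec_norm A * vnorm w"
proof -
  let ?v = "transpose_mat A *\<^sub>v w"
  have vc: "?v \<in> carrier_vec (dim_col A)" by (intro carrier_vecI) simp
  have "vnorm ?v ^ 2 = ?v \<bullet> ?v" by (rule vnorm_sq)
  also have "\<dots> = w \<bullet> (A *\<^sub>v ?v)"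
    using w vc by (intro transpose_vec_mult_scalar[of A "dim_row A" "dim_col A"]) auto
  also have "\<dots> \<le> vnorm w * vnorm (A *\<^sub>v ?v)"
    using cauchy_schwarz[of w "A *\<^sub>v ?v"] w by simp
  also have "\<dots> \<le> vnorm w * (spec_norm A * vnorm ?v)"
    using spec_norm_bound[OF vc] vnorm_nonneg[of w] by (rule mult_left_mono)
  finally have h: "vnorm ?v * vnorm ?v \<le> (vnorm w * spec_norm A) * vnorm ?v"
    by (simp add: power2_eq_square mult_ac)
  show ?thesis
  proof (cases "vnorm ?v = 0")
    case True then show ?thesis using spec_norm_nonneg[of A] vnorm_nonneg[of w] by simp
  next
    case False
    hence "vnorm ?v > 0" using vnorm_nonneg[of ?v] by linarith
    then show ?thesis using h by (simp add: mult_ac)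
  qed
qed

lemma diag_mult_vec:
  fixes S :: "real mat"
  assumes S: "S \<in> carrier_mat r r" and d: "diagonal_mat S" and u: "u \<in> carrier_vec r" and i: "i < r"
  shows "(S *\<^sub>v u) $ i = S $$ (i,i) * u $ i"
proof -
  have "(S *\<^sub>v u) $ i = (\<Sum>j\<in>{0..<r}. S $$ (i,j) * u $ j)"
    using S u i by (simp add: scalar_prod_def)
  also have "\<dots> = (\<Sum>j\<in>{0..<r}. if j = i then S $$ (i,i) * u $ i else 0)"
    by (rule sum.cong) (use d S i in \<open>auto simp: diagonal_mat_def\<close>)
  also have "\<dots> = S $$ (i,i) * u $ i" using i by simp
  finally show ?thesis .
qed

lemma diag_lower:
  fixes S :: "real mat"
  assumes S: "S \<in> carrier_mat r r" and d: "diagonal_mat S" and u: "u \<in> carrier_vec r"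
    and s: "0 \<le> s" and low: "\<And>i. i < r \<Longrightarrow> s \<le> S $$ (i,i)"
  shows "s * vnorm u \<le> vnorm (S *\<^sub>v u)"
proof -
  have "(s * vnorm u)^2 = (\<Sum>i<r. s^2 * (u $ i)^2)"
    unfolding vnorm_def using u by (simp add: power_mult_distrib sum_nonneg sum_distrib_left)
  also have "\<dots> \<le> (\<Sum>i<r. (S $$ (i,i) * u $ i)^2)"
  proof (rule sum_mono)
    fix i assume "i \<in> {..<r}"
    hence "s \<le> S $$ (i,i)" using low by auto
    hence "s^2 \<le> (S $$ (i,i))^2" using s by (intro power_mono) auto
    thus "s^2 * (u $ i)^2 \<le> (S $$ (i,i) * u $ i)^2"
      by (simp add: power_mult_distrib mult_right_mono)
  qed
  also have "\<dots> = vnorm (S *\<^sub>v u) ^ 2"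
    unfolding vnorm_def using S u diag_mult_vec[OF S d u] by (simp add: sum_nonneg)
  finally show ?thesis
    using vnorm_nonneg[of "S *\<^sub>v u"] by (meson power2_le_imp_le)
qed

lemma proj_bound:
  fixes P :: "real mat"
  assumes P: "P \<in> carrier_mat m m" and sym: "transpose_mat P = P" and idem: "P * P = P"
    and y: "y \<in> carrier_vec m"
  shows "vnorm (P *\<^sub>v y) \<le> vnorm y"
proof -
  have "vnorm (P *\<^sub>v y) ^ 2 = (P *\<^sub>v y) \<bullet> (P *\<^sub>v y)" by (rule vnorm_sq)
  also have "\<dots> = (transpose_mat P *\<^sub>v (P *\<^sub>v y)) \<bullet> y"
    using P y by (intro transpose_vec_mult_scalar[symmetric]) auto
  also have "transpose_mat P *\<^sub>v (P *\<^sub>v y) = P *\<^sub>v y"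
    using sym idem P y by (metis assoc_mult_mat_vec)
  also have "(P *\<^sub>v y) \<bullet> y \<le> vnorm (P *\<^sub>v y) * vnorm y"
    using cauchy_schwarz[of "P *\<^sub>v y" y] P y by simp
  finally have h: "vnorm (P *\<^sub>v y) * vnorm (P *\<^sub>v y) \<le> vnorm (P *\<^sub>v y) * vnorm y"
    by (simp add: power2_eq_square)
  show ?thesis
  proof (cases "vnorm (P *\<^sub>v y) = 0")
    case True then show ?thesis using vnorm_nonneg[of y] by simp
  next
    case False
    hence "vnorm (P *\<^sub>v y) > 0" using vnorm_nonneg[of "P *\<^sub>v y"] by linarith
    then show ?thesis using h by simp
  qed
qed

lemma pinv_XAAT:
  fixes A X :: "real mat"
  assumes A: "A \<in> carrier_mat m n" and X: "is_pinv A X"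
  shows "X * A * transpose_mat A = transpose_mat A"
proof -
  have Xc: "X \<in> carrier_mat n m" using X unfolding is_pinv_def using A by auto
  have e: "A * X * A = A" "transpose_mat (X * A) = X * A" using X unfolding is_pinv_def by auto
  have "X * A * transpose_mat A = transpose_mat (X * A) * transpose_mat A" using e by simp
  also have "\<dots> = transpose_mat (A * (X * A))"
    using A Xc by (simp add: transpose_mult_dim)
  also have "A * (X * A) = A" using e A Xc by (simp add: assoc_dim)
  finally show ?thesis .
qed

lemma pinv_range:
  fixes A X :: "real mat"
  assumes A: "A \<in> carrier_mat m n" and X: "is_pinv A X"
  shows "X = transpose_mat A * (transpose_mat X * X)"
proof -
  have Xc: "X \<in> carrier_mat n m" using X unfolding is_pinv_def using A by auto
  have e: "X * A * X = X" "transpose_mat (X * A) = X * A" using X unfolding is_pinv_def by auto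
  have "X = transpose_mat (X * A) * X" using e by simp
  also have "\<dots> = transpose_mat A * (transpose_mat X * X)"
    using A Xc by (simp add: transpose_mult_dim assoc_dim)
  finally show ?thesis .
qed

lemma pinv_AXA_vec:
  fixes A X :: "real mat"
  assumes A: "A \<in> carrier_mat m n" and X: "is_pinv A X" and u: "u \<in> carrier_vec n"
  shows "A *\<^sub>v u = transpose_mat X *\<^sub>v (transpose_mat A *\<^sub>v (A *\<^sub>v u))"
proof -
  have Xc: "X \<in> carrier_mat n m" using X unfolding is_pinv_def using A by auto
  have e: "A * X * A = A" "transpose_mat (A * X) = A * X" using X unfolding is_pinv_def by auto
  have "A *\<^sub>v u = (A * X * A) *\<^sub>v u" using e by simp
  also have "\<dots> = (transpose_mat (A * X) * A) *\<^sub>v u" using e by simp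
  also have "\<dots> = transpose_mat X *\<^sub>v (transpose_mat A *\<^sub>v (A *\<^sub>v u))"
    using A Xc u by (simp add: transpose_mult_dim assoc_dim assoc_dim_vec)
  finally show ?thesis .
qed

lemma pick_interval: "i < m \<Longrightarrow> pick {0..<m} i = i"
proof -
  assume i: "i < m"
  have e: "{a. a < m \<and> a \<in> (UNIV :: nat set)} = {0..<m}" by auto
  have "pick UNIV i = pick {a. a < m \<and> a \<in> (UNIV :: nat set)} i"
    by (rule pick_reduce_set) (use i e in auto)
  thus ?thesis using e pick_UNIV by simp
qed

theorem lemma4p4:
  fixes L W S V :: "real mat" and m n r :: nat and mu1 mu2 :: real and J :: "nat set"
  assumes L_dim: "L \<in> carrier_mat m n"
    and svd: "compact_svd L r W S V"
    and cohW: "\<forall>i<m. vnorm (row W i) \<le> sqrt (mu1 * real r / real m)"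
    and cohV: "\<forall>i<n. vnorm (row V i) \<le> sqrt (mu2 * real r / real n)"
    and J_sub: "J \<subseteq> {0..<n}"
  defines "C \<equiv> submatrix L {0..<m} J"
  shows "spec_norm C \<le> sqrt (mu2 * real r * real (card J) / real n) * spec_norm L \<and>
         cond_num C \<le> sqrt (mu2 * real r) * cond_num L * sqrt (real (card J) / real n)
                        * spec_norm (pinv (submatrix V J {0..<r}))"
proof -
  have Ld: "dim_row L = m" "dim_col L = n" using L_dim by auto
  have Wc: "W \<in> carrier_mat m r" and Sc: "S \<in> carrier_mat r r" and Vc: "V \<in> carrier_mat n r"
    and WW: "transpose_mat W * W = 1\<^sub>m r" and VV: "transpose_mat V * V = 1\<^sub>m r"
    and Sd: "diagonal_mat S" and Spos: "\<forall>i<r. S $$ (i,i) > 0"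
    and Sord: "\<forall>i j. i \<le> j \<and> j < r \<longrightarrow> S $$ (j,j) \<le> S $$ (i,i)"
    and Leq: "L = W * S * transpose_mat V"
    using svd Ld unfolding compact_svd_def by auto
  define k where "k = card J"
  have Jset: "{j. j < n \<and> j \<in> J} = J" using J_sub by auto
  have pickJ: "\<And>a. a < k \<Longrightarrow> pick J a < n"
    using pick_in_set J_sub unfolding k_def by fastforce
  have Cc: "C \<in> carrier_mat m k"
    unfolding C_def k_def using Ld Jset by (intro carrier_matI) (auto simp: dim_submatrix)
  have Cent: "\<And>i a. i < m \<Longrightarrow> a < k \<Longrightarrow> C $$ (i,a) = L $$ (i, pick J a)"
    unfolding C_def k_def using Ld Jset pick_interval by (subst submatrix_index) auto
  define VJ where "VJ = submatrix V J {0..<r}"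
  have rset: "{c. c < r \<and> c \<in> {0..<r}} = {0..<r}" by auto
  have VJc: "VJ \<in> carrier_mat k r"
    unfolding VJ_def k_def using Vc Jset rset by (intro carrier_matI) (auto simp: dim_submatrix)
  have VJent: "\<And>a c. a < k \<Longrightarrow> c < r \<Longrightarrow> VJ $$ (a,c) = V $$ (pick J a, c)"
    unfolding VJ_def k_def using Vc Jset rset pick_interval by (subst submatrix_index) auto
  have rowVJ: "\<And>a. a < k \<Longrightarrow> row VJ a = row V (pick J a)"
    using VJc Vc VJent pickJ by (intro eq_vecI) auto
  define B where "B = transpose_mat VJ"
  have Bc: "B \<in> carrier_mat r k" unfolding B_def using VJc by auto
  have Ceq: "C = W * S * B"
  proof (rule eq_matI)
    fix i a assume "i < dim_row (W * S * B)" "a < dim_col (W * S * B)"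
    hence i: "i < m" and a: "a < k" using Wc Bc by auto
    have "(W * S * B) $$ (i,a) = row (W * S) i \<bullet> col B a"
      using i a Wc Sc Bc by (intro index_mult_mat(1)) auto
    also have "col B a = row V (pick J a)" unfolding B_def using a VJc rowVJ by simp
    also have "row (W * S) i \<bullet> row V (pick J a) = row (W * S) i \<bullet> col (transpose_mat V) (pick J a)"
      using pickJ[OF a] Vc by simp
    also have "\<dots> = L $$ (i, pick J a)"
      unfolding Leq using i pickJ[OF a] Wc Sc Vc by (intro index_mult_mat(1)[symmetric]) auto
    finally show "C $$ (i,a) = (W * S * B) $$ (i,a)" using Cent[OF i a] by simp
  qed (use Cc Wc Bc in auto)
  have rowV2: "\<And>j. j < n \<Longrightarrow> vnorm (row V j) ^ 2 \<le> mu2 * real r / real n"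
  proof -
    fix j assume j: "j < n"
    have h: "vnorm (row V j) \<le> sqrt (mu2 * real r / real n)" using cohV j by auto
    hence "0 \<le> sqrt (mu2 * real r / real n)" using vnorm_nonneg[of "row V j"] by linarith
    hence q: "0 \<le> mu2 * real r / real n" by simp
    have "vnorm (row V j) ^ 2 \<le> (sqrt (mu2 * real r / real n)) ^ 2"
      using h vnorm_nonneg[of "row V j"] by (intro power_mono) auto
    thus "vnorm (row V j) ^ 2 \<le> mu2 * real r / real n" using q by simp
  qed
  have sumB: "(\<Sum>c<r. vnorm (row B c) ^ 2) = (\<Sum>a<k. vnorm (row V (pick J a)) ^ 2)"
  proof -
    have "(\<Sum>c<r. vnorm (row B c) ^ 2) = (\<Sum>c<r. \<Sum>a<k. (VJ $$ (a,c))^2)"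
      unfolding vnorm_def B_def using VJc by (intro sum.cong) (auto simp: sum_nonneg)
    also have "\<dots> = (\<Sum>a<k. \<Sum>c<r. (VJ $$ (a,c))^2)" by (rule sum.swap)
    also have "\<dots> = (\<Sum>a<k. vnorm (row VJ a) ^ 2)"
      unfolding vnorm_def using VJc by (intro sum.cong) (auto simp: sum_nonneg)
    also have "\<dots> = (\<Sum>a<k. vnorm (row V (pick J a)) ^ 2)"
      using rowVJ by (intro sum.cong) auto
    finally show ?thesis .
  qed
  have sumB_le: "(\<Sum>c<r. vnorm (row B c) ^ 2) \<le> mu2 * real r * real k / real n"
  proof -
    have "(\<Sum>a<k. vnorm (row V (pick J a)) ^ 2) \<le> (\<Sum>a<k. mu2 * real r / real n)"
      using rowV2 pickJ by (intro sum_mono) auto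
    moreover have "real k * (mu2 * real r) / real n = mu2 * real r * real k / real n" by simp
    ultimately show ?thesis using sumB by simp
  qed
  have qnn: "0 \<le> mu2 * real r * real k / real n"
    using sumB_le sum_nonneg[of "{..<r}" "\<lambda>c. vnorm (row B c) ^ 2"] by fastforce
  have Bbound: "\<And>x :: real vec. x \<in> carrier_vec k \<Longrightarrow> vnorm (B *\<^sub>v x) \<le> sqrt (mu2 * real r * real k / real n) * vnorm x"
  proof -
    fix x :: "real vec" assume x: "x \<in> carrier_vec k"
    have "vnorm (B *\<^sub>v x) \<le> sqrt (\<Sum>c<r. vnorm (row B c) ^ 2) * vnorm x"
      by (rule vnorm_mat_vec_bound[OF Bc x])
    also have "\<dots> \<le> sqrt (mu2 * real r * real k / real n) * vnorm x"
      using sumB_le vnorm_nonneg[of x] by (intro mult_right_mono) auto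
    finally show "vnorm (B *\<^sub>v x) \<le> sqrt (mu2 * real r * real k / real n) * vnorm x" .
  qed
  have WSu: "\<And>u. u \<in> carrier_vec r \<Longrightarrow> L *\<^sub>v (V *\<^sub>v u) = W *\<^sub>v (S *\<^sub>v u)"
  proof -
    fix u :: "real vec" assume u: "u \<in> carrier_vec r"
    have "L *\<^sub>v (V *\<^sub>v u) = W *\<^sub>v (S *\<^sub>v (transpose_mat V *\<^sub>v (V *\<^sub>v u)))"
      unfolding Leq using Wc Sc Vc u by (simp add: assoc_dim_vec)
    also have "transpose_mat V *\<^sub>v (V *\<^sub>v u) = u"
      using Vc u VV by (subst assoc_dim_vec[symmetric]) auto
    finally show "L *\<^sub>v (V *\<^sub>v u) = W *\<^sub>v (S *\<^sub>v u)" .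
  qed
  have Snorm: "\<And>u. u \<in> carrier_vec r \<Longrightarrow> vnorm (S *\<^sub>v u) \<le> spec_norm L * vnorm u"
  proof -
    fix u :: "real vec" assume u: "u \<in> carrier_vec r"
    have "vnorm (S *\<^sub>v u) = vnorm (W *\<^sub>v (S *\<^sub>v u))"
      using isometry[OF Wc WW, of "S *\<^sub>v u"] Sc u by simp
    also have "\<dots> = vnorm (L *\<^sub>v (V *\<^sub>v u))" using WSu[OF u] by simp
    also have "\<dots> \<le> spec_norm L * vnorm (V *\<^sub>v u)"
      using Ld Vc u by (intro spec_norm_bound) auto
    also have "vnorm (V *\<^sub>v u) = vnorm u" using isometry[OF Vc VV u] .
    finally show "vnorm (S *\<^sub>v u) \<le> spec_norm L * vnorm u" .
  qed
  have Cx: "\<And>x :: real vec. x \<in> carrier_vec k \<Longrightarrow> C *\<^sub>v x = W *\<^sub>v (S *\<^sub>v (B *\<^sub>v x))"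
    unfolding Ceq using Wc Sc Bc by (simp add: assoc_dim_vec)
  have claim1: "spec_norm C \<le> sqrt (mu2 * real r * real k / real n) * spec_norm L"
  proof (rule spec_norm_le)
    show "0 \<le> sqrt (mu2 * real r * real k / real n) * spec_norm L"
      using qnn spec_norm_nonneg[of L] by simp
    fix x :: "real vec" assume "x \<in> carrier_vec (dim_col C)"
    hence x: "x \<in> carrier_vec k" using Cc by simp
    have "vnorm (C *\<^sub>v x) = vnorm (S *\<^sub>v (B *\<^sub>v x))"
      using Cx[OF x] isometry[OF Wc WW, of "S *\<^sub>v (B *\<^sub>v x)"] Sc Bc x by simp
    also have "\<dots> \<le> spec_norm L * vnorm (B *\<^sub>v x)" using Snorm Bc x by simp
    also have "\<dots> \<le> spec_norm L * (sqrt (mu2 * real r * real k / real n) * vnorm x)"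
      using Bbound[OF x] spec_norm_nonneg[of L] by (rule mult_left_mono)
    finally show "vnorm (C *\<^sub>v x) \<le> sqrt (mu2 * real r * real k / real n) * spec_norm L * vnorm x"
      by (simp add: mult_ac)
  qed
  have claim2: "cond_num C \<le> sqrt (mu2 * real r) * cond_num L * sqrt (real k / real n)
                        * spec_norm (pinv VJ)"
  proof (cases "r = 0 \<or> k = 0")
    case True
    hence z: "sqrt (mu2 * real r * real k / real n) = 0" by auto
    have "spec_norm C \<le> 0" using claim1 unfolding z by simp
    hence "spec_norm C = 0" using spec_norm_nonneg[of C] by linarith
    hence l: "cond_num C = 0" unfolding cond_num_def by simp
    have "sqrt (mu2 * real r) * sqrt (real k / real n) = 0" using True by auto
    hence z2: "sqrt (mu2 * real r) * cond_num L * sqrt (real k / real n) * spec_norm (pinv VJ) = 0"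
      by (metis mult.commute mult_zero_left mult.assoc)
    show ?thesis unfolding z2 l by simp
  next
    case False
    hence r0: "r > 0" and k0: "k > 0" by auto
    have n0: "n > 0" using pickJ[OF k0] by simp
    have rv: "vnorm (row V (pick J 0)) ^ 2 \<le> mu2 * real r / real n" using rowV2 pickJ[OF k0] by simp
    hence "0 \<le> mu2 * real r / real n" using zero_le_power2[of "vnorm (row V (pick J 0))"] by linarith
    hence mu0: "0 \<le> mu2" using r0 n0 by (simp add: zero_le_divide_iff zero_le_mult_iff)
    define s where "s = S $$ (r - 1, r - 1)"
    have s0: "s > 0" unfolding s_def using Spos r0 by simp
    have low: "\<And>i. i < r \<Longrightarrow> s \<le> S $$ (i,i)" unfolding s_def using Sord r0 by auto
    define Y where "Y = pinv VJ"
    have Yp: "is_pinv VJ Y" unfolding Y_def by (rule pinv_is_pinv[OF VJc])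
    have Yc: "Y \<in> carrier_mat r k" using Yp VJc unfolding is_pinv_def by auto
    define X where "X = pinv C"
    have Xp: "is_pinv C X" unfolding X_def by (rule pinv_is_pinv[OF Cc])
    have Xc: "X \<in> carrier_mat k m" using Xp Cc unfolding is_pinv_def by auto
    define XL where "XL = pinv L"
    have XLp: "is_pinv L XL" unfolding XL_def by (rule pinv_is_pinv[OF L_dim])
    have XLc: "XL \<in> carrier_mat n m" using XLp L_dim unfolding is_pinv_def by auto
    have ST: "transpose_mat S = S"
    proof (rule eq_matI)
      fix i j assume "i < dim_row S" "j < dim_col S"
      hence ij: "i < r" "j < r" using Sc by auto
      show "transpose_mat S $$ (i, j) = S $$ (i, j)"
      proof (cases "i = j")
        case False
        then show ?thesis using ij Sd Sc unfolding diagonal_mat_def by auto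
      qed (use ij Sc in auto)
    qed (use Sc in auto)
    have partA: "spec_norm X \<le> spec_norm Y / s"
    proof (rule spec_norm_le)
      show "0 \<le> spec_norm Y / s" using spec_norm_nonneg[of Y] s0 by simp
      fix y :: "real vec" assume "y \<in> carrier_vec (dim_col X)"
      hence y: "y \<in> carrier_vec m" using Xc by simp
      define z where "z = X *\<^sub>v y"
      have zc: "z \<in> carrier_vec k" unfolding z_def using Xc y by simp
      have "z = (transpose_mat C * (transpose_mat X * X)) *\<^sub>v y"
        unfolding z_def using pinv_range[OF Cc Xp] by simp
      also have "\<dots> = transpose_mat C *\<^sub>v (transpose_mat X *\<^sub>v z)"
        unfolding z_def using Cc Xc y by (simp add: assoc_dim_vec)
      also have "transpose_mat C = VJ * (transpose_mat S * transpose_mat W)"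
        unfolding Ceq B_def using Wc Sc VJc by (simp add: transpose_mult_dim assoc_dim)
      finally have "z = VJ *\<^sub>v ((transpose_mat S * transpose_mat W) *\<^sub>v (transpose_mat X *\<^sub>v z))"
        using VJc Sc Wc Xc zc by (simp add: assoc_dim_vec)
      moreover have "(transpose_mat S * transpose_mat W) *\<^sub>v (transpose_mat X *\<^sub>v z) \<in> carrier_vec r"
        using Sc by (intro carrier_vecI) simp
      ultimately obtain u where u: "u \<in> carrier_vec r" and zu: "z = VJ *\<^sub>v u" by blast
      have "z = transpose_mat Y *\<^sub>v (transpose_mat VJ *\<^sub>v (VJ *\<^sub>v u))"
        using pinv_AXA_vec[OF VJc Yp u] zu by simp
      hence zY: "z = transpose_mat Y *\<^sub>v (B *\<^sub>v z)" using zu unfolding B_def by simp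
      have Bz: "B *\<^sub>v z \<in> carrier_vec r" using Bc zc by simp
      have n1: "vnorm z \<le> spec_norm Y * vnorm (B *\<^sub>v z)"
        using transpose_bound[of "B *\<^sub>v z" Y] Bz Yc zY by simp
      have "s * vnorm (B *\<^sub>v z) \<le> vnorm (S *\<^sub>v (B *\<^sub>v z))"
        by (rule diag_lower[OF Sc Sd Bz]) (use s0 low in auto)
      also have "\<dots> = vnorm (C *\<^sub>v z)"
        using Cx[OF zc] isometry[OF Wc WW, of "S *\<^sub>v (B *\<^sub>v z)"] Sc Bz by simp
      also have "C *\<^sub>v z = (C * X) *\<^sub>v y" unfolding z_def using Cc Xc y by simp
      also have "vnorm \<dots> \<le> vnorm y"
      proof (rule proj_bound[OF _ _ _ y])
        show "C * X \<in> carrier_mat m m" using Cc Xc by simp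
        show "transpose_mat (C * X) = C * X" using Xp unfolding is_pinv_def by simp
        have "C * X * (C * X) = C * X * C * X" using Cc Xc by (simp add: assoc_dim)
        thus "C * X * (C * X) = C * X" using Xp unfolding is_pinv_def by simp
      qed
      finally have n2: "s * vnorm (B *\<^sub>v z) \<le> vnorm y" .
      have "vnorm (B *\<^sub>v z) \<le> vnorm y / s" using n2 s0 by (simp add: pos_le_divide_eq mult.commute)
      hence "spec_norm Y * vnorm (B *\<^sub>v z) \<le> spec_norm Y * (vnorm y / s)"
        using spec_norm_nonneg[of Y] by (rule mult_left_mono)
      hence "vnorm z \<le> spec_norm Y * (vnorm y / s)" using n1 by linarith
      thus "vnorm (X *\<^sub>v y) \<le> spec_norm Y / s * vnorm y" unfolding z_def by simp
    qed
    have partB: "1 / s \<le> spec_norm XL"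
    proof -
      define e :: "real vec" where "e = unit_vec r (r - 1)"
      have ec: "e \<in> carrier_vec r" unfolding e_def by simp
      have ne: "vnorm e = 1"
      proof -
        have "(\<Sum>i<r. (e $ i)^2) = (\<Sum>i<r. if i = r - 1 then 1 else 0)"
          unfolding e_def by (intro sum.cong) auto
        also have "\<dots> = 1" using r0 by simp
        finally show ?thesis unfolding vnorm_def using ec by simp
      qed
      have Se: "S *\<^sub>v e = s \<cdot>\<^sub>v e"
      proof (rule eq_vecI)
        fix i assume "i < dim_vec (s \<cdot>\<^sub>v e)"
        hence i: "i < r" using ec by simp
        have "(S *\<^sub>v e) $ i = S $$ (i,i) * e $ i" by (rule diag_mult_vec[OF Sc Sd ec i])
        also have "\<dots> = s * e $ i" unfolding e_def s_def using i r0 by (cases "i = r - 1") auto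
        finally show "(S *\<^sub>v e) $ i = (s \<cdot>\<^sub>v e) $ i" using i ec by simp
      qed (use Sc ec in simp)
      define x where "x = V *\<^sub>v e"
      have xc: "x \<in> carrier_vec n" unfolding x_def using Vc ec by simp
      have nx: "vnorm x = 1" unfolding x_def using isometry[OF Vc VV ec] ne by simp
      define y where "y = L *\<^sub>v x"
      have "y = W *\<^sub>v (S *\<^sub>v e)" unfolding y_def x_def by (rule WSu[OF ec])
      also have "\<dots> = W *\<^sub>v (s \<cdot>\<^sub>v e)" using Se by simp
      also have "\<dots> = s \<cdot>\<^sub>v (W *\<^sub>v e)" by (rule mult_mat_vec[OF Wc ec])
      finally have yeq: "y = s \<cdot>\<^sub>v (W *\<^sub>v e)" .
      have ny: "vnorm y = s" unfolding yeq using isometry[OF Wc WW ec] ne s0 by (simp add: vnorm_smult)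
      define u where "u = W *\<^sub>v ((1 / s) \<cdot>\<^sub>v e)"
      have uc: "u \<in> carrier_vec m" unfolding u_def using Wc ec by simp
      have LT: "transpose_mat L = V * (S * transpose_mat W)"
      proof -
        have "transpose_mat (W * S * transpose_mat V) = transpose_mat (transpose_mat V) * transpose_mat (W * S)"
          by (rule transpose_mult_dim) (use Wc Sc Vc in simp)
        also have "transpose_mat (W * S) = transpose_mat S * transpose_mat W"
          by (rule transpose_mult_dim) (use Wc Sc in simp)
        finally show ?thesis unfolding Leq using ST by simp
      qed
      have "transpose_mat W *\<^sub>v u = (1 / s) \<cdot>\<^sub>v e"
        unfolding u_def using Wc ec WW by (subst assoc_dim_vec[symmetric]) auto
      hence "transpose_mat L *\<^sub>v u = V *\<^sub>v (S *\<^sub>v ((1 / s) \<cdot>\<^sub>v e))"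
        unfolding LT using Vc Sc Wc uc by (simp add: assoc_dim_vec)
      also have "S *\<^sub>v ((1 / s) \<cdot>\<^sub>v e) = e"
        using mult_mat_vec[OF Sc ec] Se s0 by (simp add: smult_smult_assoc)
      finally have LTu: "transpose_mat L *\<^sub>v u = x" unfolding x_def .
      have "XL *\<^sub>v y = XL *\<^sub>v (L *\<^sub>v (transpose_mat L *\<^sub>v u))" unfolding y_def LTu ..
      also have "\<dots> = (XL * L * transpose_mat L) *\<^sub>v u"
        using XLc L_dim uc by (simp add: assoc_dim_vec)
      also have "\<dots> = x" using pinv_XAAT[OF L_dim XLp] LTu by simp
      finally have "XL *\<^sub>v y = x" .
      hence "1 \<le> spec_norm XL * s"
        using spec_norm_bound[of y XL] nx ny XLc y_def L_dim xc by (simp add: y_def)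
      thus ?thesis using s0 by (simp add: divide_le_eq mult.commute)
    qed
    have e1: "cond_num C \<le> (sqrt (mu2 * real r * real k / real n) * spec_norm L) * (spec_norm Y / s)"
      unfolding cond_num_def X_def[symmetric]
      by (rule mult_mono[OF claim1 partA]) (use spec_norm_nonneg qnn in auto)
    have sq: "sqrt (mu2 * real r * real k / real n) = sqrt (mu2 * real r) * sqrt (real k / real n)"
      by (simp add: real_sqrt_mult[symmetric])
    have nn: "0 \<le> sqrt (mu2 * real r) * spec_norm L * sqrt (real k / real n) * spec_norm Y"
      using mu0 spec_norm_nonneg[of L] spec_norm_nonneg[of Y] by simp
    have "(sqrt (mu2 * real r * real k / real n) * spec_norm L) * (spec_norm Y / s)
        = (sqrt (mu2 * real r) * spec_norm L * sqrt (real k / real n) * spec_norm Y) * (1 / s)"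
      unfolding sq by simp
    also have "\<dots> \<le> (sqrt (mu2 * real r) * spec_norm L * sqrt (real k / real n) * spec_norm Y) * spec_norm XL"
      using partB nn by (rule mult_left_mono)
    also have "\<dots> = sqrt (mu2 * real r) * cond_num L * sqrt (real k / real n) * spec_norm (pinv VJ)"
      unfolding cond_num_def XL_def Y_def by (simp add: mult_ac)
    finally show ?thesis using e1 by simp
  qed
  show ?thesis using claim1 claim2 unfolding k_def VJ_def by simp
qed

end
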